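(* For each $\ell\geq 3$ there are infinitely many $4$-critical graphs of odd-girth $>\ell$, forming a family of quadratic edge density; in particular $c_{\ell,4}\geq \frac{1}{(\ell+1)^2}$.
   Context: A graph is $k$-critical if it has chromatic number $k$ and removing any edge allows it to be properly $(k-1)$-colored. The odd-girth of a graph is the length of a shortest odd cycle. For integers $\ell\geq 3$, $k\geq 4$, the density constant $c_{\ell,k}$ is the supremum of the constants $c$ such that there are infinitely many $k$-critical graphs of odd-girth $>\ell$, each having more than $cn^2$ edges, where $n$ is its number of vertices. *)

theory Defs
  imports Complex_Main
begin

definition graph :: "nat \<Rightarrow> (nat \<Rightarrow> nat \<Rightarrow> bool) \<Rightarrow> bool" where
  "graph n E \<longleftrightarrow> (\<forall>u v. E u v \<longrightarrow> u < n \<and> v < n \<and> u \<noteq> v \<and> E v u)"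

definition num_edges :: "nat \<Rightarrow> (nat \<Rightarrow> nat \<Rightarrow> bool) \<Rightarrow> nat" where
  "num_edges n E = card {(u, v). u < v \<and> v < n \<and> E u v}"

definition colorable :: "nat \<Rightarrow> (nat \<Rightarrow> nat \<Rightarrow> bool) \<Rightarrow> nat \<Rightarrow> bool" where
  "colorable n E k \<longleftrightarrow> (\<exists>f :: nat \<Rightarrow> nat. (\<forall>v<n. f v < k) \<and> (\<forall>u v. E u v \<longrightarrow> f u \<noteq> f v))"

definition chromatic_number :: "nat \<Rightarrow> (nat \<Rightarrow> nat \<Rightarrow> bool) \<Rightarrow> nat" where
  "chromatic_number n E = (LEAST k. colorable n E k)"

definition remove_edge :: "(nat \<Rightarrow> nat \<Rightarrow> bool) \<Rightarrow> nat \<Rightarrow> nat \<Rightarrow> nat \<Rightarrow> nat \<Rightarrow> bool" where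
  "remove_edge E a b = (\<lambda>u v. E u v \<and> \<not> ((u = a \<and> v = b) \<or> (u = b \<and> v = a)))"

definition critical :: "nat \<Rightarrow> nat \<Rightarrow> (nat \<Rightarrow> nat \<Rightarrow> bool) \<Rightarrow> bool" where
  "critical k n E \<longleftrightarrow> graph n E \<and> chromatic_number n E = k \<and>
     (\<forall>a b. E a b \<longrightarrow> colorable n (remove_edge E a b) (k - 1))"

definition is_cycle :: "nat \<Rightarrow> (nat \<Rightarrow> nat \<Rightarrow> bool) \<Rightarrow> nat list \<Rightarrow> bool" where
  "is_cycle n E cs \<longleftrightarrow> length cs \<ge> 3 \<and> distinct cs \<and> set cs \<subseteq> {..<n} \<and>
     (\<forall>i < length cs. E (cs ! i) (cs ! ((i + 1) mod length cs)))"

text \<open>Odd-girth > l: every odd cycle has length > l (vacuous if there are no odd cycles,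
  i.e. odd-girth infinite).\<close>
definition odd_girth_gt :: "nat \<Rightarrow> (nat \<Rightarrow> nat \<Rightarrow> bool) \<Rightarrow> nat \<Rightarrow> bool" where
  "odd_girth_gt n E l \<longleftrightarrow> (\<forall>cs. is_cycle n E cs \<and> odd (length cs) \<longrightarrow> length cs > l)"

text \<open>"Infinitely many graphs with property P" (up to isomorphism) is expressed as:
  for every N there is such a graph with at least N vertices (there are only finitely many
  graphs on a given number of vertices).\<close>
definition density_const :: "nat \<Rightarrow> nat \<Rightarrow> real" where
  "density_const l k = Sup {c :: real. \<forall>N. \<exists>n \<ge> N. \<exists>E.
      critical k n E \<and> odd_girth_gt n E l \<and> real (num_edges n E) > c * (real n)^2}"

end

theory Submission
  imports Defs
begin


locale tg =
  fixes m s :: nat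
  assumes m_odd: "odd m" and m_ge: "5 \<le> m"
begin

definition R :: "nat \<Rightarrow> nat \<Rightarrow> bool" where
  "R i i' \<longleftrightarrow> i' = Suc i mod m \<or> i = Suc i' mod m"

definition pos :: "nat \<Rightarrow> nat \<Rightarrow> nat" where
  "pos d i = (i + m - d) mod m"

lemma m_pos: "0 < m" using m_ge by simp

lemma pos_lt: "pos d i < m" unfolding pos_def using m_pos by simp

lemma pos_suc: assumes "d \<le> m" shows "pos d (Suc i mod m) = Suc (pos d i) mod m"
proof -
  have "pos d (Suc i mod m) = (Suc i mod m + (m - d)) mod m" unfolding pos_def using assms by simp
  also have "\<dots> = (Suc i + (m - d)) mod m" by (simp add: mod_add_left_eq)
  also have "\<dots> = Suc (i + (m - d)) mod m" by simp
  also have "\<dots> = Suc ((i + (m - d)) mod m) mod m" by (simp add: mod_Suc_eq)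
  finally show ?thesis unfolding pos_def using assms by simp
qed

lemma pos_zero: assumes "i < m" "d < m" shows "pos d i = 0 \<longleftrightarrow> i = d"
proof
  assume h: "pos d i = 0"
  show "i = d"
  proof (cases "d \<le> i")
    case True
    then have "i + m - d = (i - d) + m" by simp
    then have "(i - d) mod m = 0" using h unfolding pos_def by simp
    then show ?thesis using True assms by simp
  next
    case False
    then have "i + m - d < m" "0 < i + m - d" using assms by auto
    then show ?thesis using h unfolding pos_def by simp
  qed
qed (simp add: pos_def)

lemma suc_mod_inj: "i < m \<Longrightarrow> j < m \<Longrightarrow> Suc i mod m = Suc j mod m \<Longrightarrow> i = j"
  by (metis Suc_lessI mod_Suc mod_less nat.inject nat.simps(3))

lemma suc_mod_lt: "Suc i mod m < m" using m_pos by simp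

definition beta :: "nat \<Rightarrow> nat \<Rightarrow> nat \<Rightarrow> nat \<Rightarrow> nat \<Rightarrow> nat" where
  "beta x y z d i = (if i = d then x else if odd (pos d i) then y else z)"

lemma beta_proper:
  assumes "x \<noteq> y" "y \<noteq> z" "x \<noteq> z" "d < m" "i < m"
  shows "beta x y z d i \<noteq> beta x y z d (Suc i mod m)"
proof -
  let ?k = "pos d i"
  have k: "pos d (Suc i mod m) = Suc ?k mod m" using pos_suc assms by simp
  have klt: "?k < m" by (rule pos_lt)
  show ?thesis
  proof (cases "?k = m - 1")
    case True
    then have "Suc ?k mod m = 0" using m_pos by simp
    then have "Suc i mod m = d" using k pos_zero[OF suc_mod_lt assms(4)] by simp
    moreover have "i \<noteq> d" using True pos_zero[OF assms(5,4)] m_ge by simp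
    moreover have "even ?k" using True m_odd m_ge by simp
    ultimately show ?thesis unfolding beta_def using assms by auto
  next
    case False
    then have "Suc ?k mod m = Suc ?k" using klt by simp
    then have k2: "pos d (Suc i mod m) = Suc ?k" using k by simp
    then have "Suc i mod m \<noteq> d" using pos_zero[OF suc_mod_lt[of i] assms(4)] by simp
    then show ?thesis unfolding beta_def using k2 assms pos_zero[OF assms(5,4)] by auto
  qed
qed

lemma beta_R:
  assumes "x \<noteq> y" "y \<noteq> z" "x \<noteq> z" "d < m" "i < m" "i' < m" "R i i'"
  shows "beta x y z d i \<noteq> beta x y z d i'"
  using assms beta_proper unfolding R_def by metis

lemma beta_at: "d < m \<Longrightarrow> beta x y z d d = x" unfolding beta_def by simp
lemma beta_ne: "d < m \<Longrightarrow> i < m \<Longrightarrow> i \<noteq> d \<Longrightarrow> beta x y z d i = y \<or> beta x y z d i = z"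
  unfolding beta_def by auto

lemma beta_next: assumes "d < m" shows "beta x y z d (Suc d mod m) = y"
proof -
  have "pos d (Suc d mod m) = 1" using pos_suc[of d d] assms pos_zero[of d d] m_ge by simp
  moreover have "Suc d mod m \<noteq> d" using calculation pos_zero[OF suc_mod_lt[of d] assms] by auto
  ultimately show ?thesis unfolding beta_def by simp
qed

lemma beta_next2: assumes "d < m" shows "beta x y z d (Suc (Suc d mod m) mod m) = z"
proof -
  have "pos d (Suc d mod m) = 1" using pos_suc[of d d] assms pos_zero[of d d] m_ge by simp
  then have "pos d (Suc (Suc d mod m) mod m) = 2" using pos_suc[of d "Suc d mod m"] assms m_ge by simp
  moreover have "Suc (Suc d mod m) mod m \<noteq> d" using calculation pos_zero[OF suc_mod_lt[of "Suc d mod m"] assms] by auto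
  ultimately show ?thesis unfolding beta_def by simp
qed

lemma beta_prev2: assumes "d < m" "i < m" "Suc (Suc i mod m) mod m = d" shows "beta x y z d i = y"
proof -
  have "pos d (Suc (Suc i mod m) mod m) = 0" using assms pos_zero[OF suc_mod_lt[of "Suc i mod m"] assms(1)] by simp
  moreover have "pos d (Suc (Suc i mod m) mod m) = Suc (pos d (Suc i mod m)) mod m" using pos_suc[of d] assms(1) by simp
  moreover have "pos d (Suc i mod m) = Suc (pos d i) mod m" using pos_suc[of d] assms(1) by simp
  ultimately have "Suc (Suc (pos d i) mod m) mod m = 0" by simp
  then have "pos d i = m - 2"
  proof -
    assume h: "Suc (Suc (pos d i) mod m) mod m = 0"
    have lt: "pos d i < m" by (rule pos_lt)
    show ?thesis
    proof (cases "Suc (pos d i) < m")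
      case True
      then have "Suc (Suc (pos d i)) mod m = 0" using h by simp
      moreover have "Suc (Suc (pos d i)) \<le> m" using True by simp
      ultimately have "Suc (Suc (pos d i)) = m" using m_pos
        by (metis le_neq_implies_less mod_less nat.simps(3))
      then show ?thesis by simp
    next
      case False
      then have "Suc (pos d i) = m" using lt by simp
      then have "Suc (Suc (pos d i) mod m) mod m = 1" using m_ge by simp
      then show ?thesis using h by simp
    qed
  qed
  moreover have "i \<noteq> d" using calculation pos_zero[OF assms(2,1)] m_ge by simp
  ultimately show ?thesis unfolding beta_def using m_odd m_ge by auto
qed

end


context tg begin

definition gadj :: "nat \<Rightarrow> nat \<Rightarrow> nat \<Rightarrow> nat \<Rightarrow> bool" where
  "gadj j i j' i' \<longleftrightarrow> (j = 0 \<and> j' = 0 \<and> i' = Suc i mod m) \<or> (j' = Suc j \<and> j' \<le> s \<and> R i i')"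

lemma copy_ok:
  assumes b: "\<forall>i<m. b i \<noteq> b (Suc i mod m)" and "gadj j i j' i'" "i < m" "i' < m"
  shows "b i \<noteq> b i'"
  using assms unfolding gadj_def R_def by metis

definition alpha :: "nat \<Rightarrow> nat \<Rightarrow> nat \<Rightarrow> nat \<Rightarrow> nat" where
  "alpha y z p i = (if even (pos (Suc p mod m) i) then y else z)"

lemma alpha_proper:
  assumes "y \<noteq> z" "p < m" "i < m" "i \<noteq> p"
  shows "alpha y z p i \<noteq> alpha y z p (Suc i mod m)"
proof -
  let ?d = "Suc p mod m"
  have dlt: "?d < m" by (rule suc_mod_lt)
  let ?k = "pos ?d i"
  have k: "pos ?d (Suc i mod m) = Suc ?k mod m" using pos_suc[of ?d i] dlt by simp
  have klt: "?k < m" by (rule pos_lt)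
  have "?k \<noteq> m - 1"
  proof
    assume "?k = m - 1"
    then have "pos ?d (Suc i mod m) = 0" using k m_pos by simp
    then have "Suc i mod m = ?d" using pos_zero[OF suc_mod_lt[of i] dlt] by simp
    then show False using suc_mod_inj assms by blast
  qed
  then have "pos ?d (Suc i mod m) = Suc ?k" using k klt by simp
  then show ?thesis unfolding alpha_def using assms by auto
qed

definition kap :: "nat \<Rightarrow> nat" where "kap j = (if even (s + j) then 1 else 0)"

definition Lbase :: "nat \<Rightarrow> nat \<Rightarrow> nat \<Rightarrow> nat" where
  "Lbase p j i = (if j = 0 then alpha 2 (1 - kap 1) p i else kap j)"

lemma Lbase_lt: "Lbase p j i < 3"
  unfolding Lbase_def alpha_def kap_def by auto

lemma Lbase_top: "Lbase p s i \<noteq> 0"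
  unfolding Lbase_def alpha_def kap_def by auto

lemma Lbase_ok:
  assumes "p < m" "i < m" "i' < m" "gadj j i j' i'" "\<not> (j = 0 \<and> j' = 0 \<and> i = p)"
  shows "Lbase p j i \<noteq> Lbase p j' i'"
proof (cases "j = 0 \<and> j' = 0")
  case True
  then have "i' = Suc i mod m" "i \<noteq> p" using assms unfolding gadj_def by auto
  then show ?thesis using alpha_proper[of 2 "1 - kap 1" p i] assms True
    unfolding Lbase_def kap_def by auto
next
  case False
  then have "j' = Suc j" using assms unfolding gadj_def by auto
  then show ?thesis unfolding Lbase_def alpha_def kap_def by simp
qed

definition xA :: "nat \<Rightarrow> nat" where "xA jl = (if Suc jl = s then 1 else 0)"

definition LA :: "nat \<Rightarrow> nat \<Rightarrow> nat \<Rightarrow> nat \<Rightarrow> nat" where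
  "LA jl d j i = (if j \<le> jl then beta (xA jl) 2 (1 - xA jl) d i
     else if j = Suc jl then (if i = Suc d mod m then 2 else xA jl)
     else (if even (j - Suc jl) then 2 else 1))"

definition LB :: "nat \<Rightarrow> nat \<Rightarrow> nat \<Rightarrow> nat \<Rightarrow> nat" where
  "LB jl d j i = (if j \<le> jl then beta (xA jl) (1 - xA jl) 2 d i
     else if j = Suc jl then (if Suc i mod m = d then 2 else xA jl)
     else (if even (j - Suc jl) then 2 else 1))"

lemma xA_cases: "xA jl = 0 \<or> xA jl = 1" unfolding xA_def by auto

lemma beta_lt3: "x < 3 \<Longrightarrow> y < 3 \<Longrightarrow> z < 3 \<Longrightarrow> beta x y z d i < 3"
  unfolding beta_def by auto

lemma LA_lt: "LA jl d j i < 3"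
  unfolding LA_def using xA_cases[of jl] by (auto intro!: beta_lt3)

lemma LB_lt: "LB jl d j i < 3"
  unfolding LB_def using xA_cases[of jl] by (auto intro!: beta_lt3)

lemma LA_top: assumes "Suc jl \<le> s" "d < m" shows "LA jl d s i \<noteq> 0"
  using assms unfolding LA_def xA_def by auto

lemma LB_top: assumes "Suc jl \<le> s" "d < m" shows "LB jl d s i \<noteq> 0"
  using assms unfolding LB_def xA_def by auto

lemma LA_ok:
  assumes "Suc jl \<le> s" "d < m" "i < m" "i' < m" "gadj j i j' i'"
    "\<not> (j = jl \<and> i = d \<and> j' = Suc jl \<and> Suc i' mod m = d)"
  shows "LA jl d j i \<noteq> LA jl d j' i'"
proof -
  let ?x = "xA jl"
  have dist: "?x \<noteq> 2" "2 \<noteq> 1 - ?x" "?x \<noteq> 1 - ?x" using xA_cases[of jl] by auto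
  show ?thesis
  proof (cases "j = 0 \<and> j' = 0")
    case True
    then have "i' = Suc i mod m" using assms unfolding gadj_def by auto
    then show ?thesis using True beta_proper[OF dist assms(2,3)] unfolding LA_def by simp
  next
    case False
    then have jj: "j' = Suc j" "R i i'" using assms unfolding gadj_def by auto
    consider (lo) "j' \<le> jl" | (mid) "j = jl" | (mid2) "j = Suc jl" | (hi) "j > Suc jl"
      using jj by linarith
    then show ?thesis
    proof cases
      case lo
      then show ?thesis using beta_R[OF dist assms(2,3,4) jj(2)] jj unfolding LA_def by simp
    next
      case mid
      show ?thesis
      proof (cases "i' = Suc d mod m")
        case True
        have "i = d \<or> i = Suc (Suc d mod m) mod m"
        proof (cases "i' = Suc i mod m")
          case True2: True
          then have "Suc i mod m = Suc d mod m" using True by simp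
          then show ?thesis using suc_mod_inj assms(2,3) by blast
        next
          case False
          then show ?thesis using jj(2) True unfolding R_def by simp
        qed
        then have "beta ?x 2 (1 - ?x) d i \<noteq> 2" using beta_at[OF assms(2)] beta_next2[OF assms(2)] dist
          by auto
        then show ?thesis using mid True jj unfolding LA_def by simp
      next
        case False
        have "i \<noteq> d"
        proof
          assume "i = d"
          then have "d = Suc i' mod m" using jj(2) False unfolding R_def by auto
          then show False using assms(6) mid jj \<open>i = d\<close> by simp
        qed
        then have "beta ?x 2 (1 - ?x) d i \<noteq> ?x" using beta_ne[OF assms(2,3), of ?x 2 "1 - ?x"] dist by auto
        then show ?thesis using mid False jj unfolding LA_def by simp
      qed
    next
      case mid2
      then have "Suc (Suc jl) \<le> s" using jj assms unfolding gadj_def by simp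
      then have "?x = 0" unfolding xA_def by simp
      then show ?thesis using mid2 jj unfolding LA_def by auto
    next
      case hi
      have e: "Suc j - Suc jl = Suc (j - Suc jl)" using hi by simp
      have "\<not> j \<le> jl" "j \<noteq> Suc jl" "\<not> Suc j \<le> jl" "Suc j \<noteq> Suc jl" using hi by auto
      then show ?thesis using jj e unfolding LA_def by simp
    qed
  qed
qed

lemma LB_ok:
  assumes "Suc jl \<le> s" "d < m" "i < m" "i' < m" "gadj j i j' i'"
    "\<not> (j = jl \<and> i = d \<and> j' = Suc jl \<and> i' = Suc d mod m)"
  shows "LB jl d j i \<noteq> LB jl d j' i'"
proof -
  let ?x = "xA jl"
  have dist: "?x \<noteq> 1 - ?x" "1 - ?x \<noteq> 2" "?x \<noteq> 2" using xA_cases[of jl] by auto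
  show ?thesis
  proof (cases "j = 0 \<and> j' = 0")
    case True
    then have "i' = Suc i mod m" using assms unfolding gadj_def by auto
    then show ?thesis using True beta_proper[OF dist assms(2,3)] unfolding LB_def by simp
  next
    case False
    then have jj: "j' = Suc j" "R i i'" using assms unfolding gadj_def by auto
    consider (lo) "j' \<le> jl" | (mid) "j = jl" | (mid2) "j = Suc jl" | (hi) "j > Suc jl"
      using jj by linarith
    then show ?thesis
    proof cases
      case lo
      then show ?thesis using beta_R[OF dist assms(2,3,4) jj(2)] jj unfolding LB_def by simp
    next
      case mid
      show ?thesis
      proof (cases "Suc i' mod m = d")
        case True
        have "i = d \<or> Suc (Suc i mod m) mod m = d"
        proof (cases "i' = Suc i mod m")
          case True2: True
          then show ?thesis using True by simp
        next
          case False
          then have "i = Suc i' mod m" using jj(2) unfolding R_def by simp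
          then show ?thesis using True by simp
        qed
        then have "beta ?x (1 - ?x) 2 d i \<noteq> 2" using beta_at[OF assms(2)] beta_prev2[OF assms(2,3)] dist
          by auto
        then show ?thesis using mid True jj unfolding LB_def by simp
      next
        case False
        have "i \<noteq> d"
        proof
          assume "i = d"
          then have "i' = Suc d mod m" using jj(2) False unfolding R_def by auto
          then show False using assms(6) mid jj \<open>i = d\<close> by simp
        qed
        then have "beta ?x (1 - ?x) 2 d i \<noteq> ?x" using beta_ne[OF assms(2,3), of ?x "1 - ?x" 2] dist by auto
        then show ?thesis using mid False jj unfolding LB_def by simp
      qed
    next
      case mid2
      then have "Suc (Suc jl) \<le> s" using jj assms unfolding gadj_def by simp
      then have "?x = 0" unfolding xA_def by simp
      then show ?thesis using mid2 jj unfolding LB_def by auto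
    next
      case hi
      have e: "Suc j - Suc jl = Suc (j - Suc jl)" using hi by simp
      have "\<not> j \<le> jl" "j \<noteq> Suc jl" "\<not> Suc j \<le> jl" "Suc j \<noteq> Suc jl" using hi by auto
      then show ?thesis using jj e unfolding LB_def by simp
    qed
  qed
qed

end


definition dl :: "nat \<Rightarrow> nat \<Rightarrow> int" where
  "dl a b = (if b = (a + 1) mod 3 then 1 else -1)"

definition g2 :: "nat \<Rightarrow> nat \<Rightarrow> int" where
  "g2 a b = (if a = b then 0 else -2 * dl a b)"

definition phi :: "nat \<Rightarrow> nat \<Rightarrow> int" where
  "phi a x = (if x = (a + 1) mod 3 then 0 else -1)"

lemma lt3_set: "(x::nat) < 3 \<Longrightarrow> x \<in> {0,1,2}" by auto
lemma two_step: assumes "a < 3" "b < 3" "c < 3" "a \<noteq> b" "b \<noteq> c" shows "dl a b + dl b c = g2 a c"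
proof -
  have "\<forall>a\<in>{0,1,2}. \<forall>b\<in>{0,1,2}. \<forall>c\<in>{0::nat,1,2}. a \<noteq> b \<longrightarrow> b \<noteq> c \<longrightarrow> dl a b + dl b c = g2 a c"
    unfolding dl_def g2_def by simp
  then show ?thesis using assms lt3_set by blast
qed
lemma g2_phi: assumes "a < 3" "x < 3" "y < 3" "x \<noteq> a" "y \<noteq> a" shows "g2 x y = 2 * (phi a y - phi a x)"
proof -
  have "\<forall>a\<in>{0,1,2}. \<forall>x\<in>{0,1,2}. \<forall>y\<in>{0::nat,1,2}. x \<noteq> a \<longrightarrow> y \<noteq> a \<longrightarrow> g2 x y = 2 * (phi a y - phi a x)"
    unfolding dl_def g2_def phi_def by simp
  then show ?thesis using assms lt3_set by blast
qed
lemma dl_pm: "dl a b = 1 \<or> dl a b = -1" unfolding dl_def by auto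

lemma sum_pm_parity:
  fixes f :: "nat \<Rightarrow> int" and n :: nat
  assumes "\<forall>i<n. f i = (1::int) \<or> f i = -1"
  shows "even (\<Sum>i<n. f i) \<longleftrightarrow> even n"
  using assms
proof (induction n)
  case 0 then show ?case by simp
next
  case (Suc n)
  then have ih: "even (\<Sum>i<n. f i) \<longleftrightarrow> even n" by simp
  have "f n = 1 \<or> f n = -1" using Suc.prems by simp
  then show ?case using ih by auto
qed

lemma sum_pm_abs:
  fixes f :: "nat \<Rightarrow> int" and n :: nat
  assumes "\<forall>i<n. f i = (1::int) \<or> f i = -1"
  shows "\<bar>\<Sum>i<n. f i\<bar> \<le> int n"
  using assms
proof (induction n)
  case 0 then show ?case by simp
next
  case (Suc n)
  then have ih: "\<bar>\<Sum>i<n. f i\<bar> \<le> int n" by simp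
  have "f n = 1 \<or> f n = -1" using Suc.prems by simp
  then show ?case using ih by auto
qed

lemma sum_shift_periodic:
  fixes F :: "nat \<Rightarrow> int"
  assumes "F m = F 0"
  shows "(\<Sum>i<m. F (Suc i)) = (\<Sum>i<m. F i)"
proof -
  have "(\<Sum>i<Suc m. F i) = F 0 + (\<Sum>i<m. F (Suc i))" by (rule sum.lessThan_Suc_shift)
  moreover have "(\<Sum>i<Suc m. F i) = (\<Sum>i<m. F i) + F m" by simp
  ultimately show ?thesis using assms by (simp add: add.commute)
qed

context tg begin

lemma winding:
  fixes L :: "nat \<Rightarrow> nat \<Rightarrow> nat" and a :: nat
  assumes hlt: "\<forall>j\<le>s. \<forall>i<m. L j i < 3"
    and hbase: "\<forall>i<m. L 0 i \<noteq> L 0 (Suc i mod m)"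
    and hlay: "\<forall>j<s. \<forall>i<m. L (Suc j) i \<noteq> L j (Suc i mod m) \<and> L (Suc j) (Suc i mod m) \<noteq> L j i"
    and htop: "\<forall>i<m. L s i \<noteq> a" and ha: "a < 3"
  shows False
proof -
  define c where "c j i = L j (i mod m)" for j i
  have per: "c j (i + m) = c j i" for j i unfolding c_def by simp
  have clt: "j \<le> s \<Longrightarrow> c j i < 3" for j i using hlt m_pos unfolding c_def by simp
  have cb: "c 0 i \<noteq> c 0 (Suc i)" for i
    using hbase[rule_format, of "i mod m"] m_pos unfolding c_def by (simp add: mod_Suc_eq)
  have cl1: "j < s \<Longrightarrow> c (Suc j) i \<noteq> c j (Suc i)" for j i
    using hlay[rule_format, of j "i mod m"] m_pos unfolding c_def by (simp add: mod_Suc_eq)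
  have cl2: "j < s \<Longrightarrow> c (Suc j) (Suc i) \<noteq> c j i" for j i
    using hlay[rule_format, of j "i mod m"] m_pos unfolding c_def by (simp add: mod_Suc_eq)
  have cl1s: "j < s \<Longrightarrow> c j (Suc i) \<noteq> c (Suc j) i" for j i using cl1 by metis
  have cl2s: "j < s \<Longrightarrow> c j i \<noteq> c (Suc j) (Suc i)" for j i using cl2 by metis
  define GS where "GS j = (\<Sum>i<m. g2 (c j i) (c j (Suc (Suc i))))" for j
  have stepB: "GS (Suc j) = GS j" if js: "j < s" for j
  proof -
    define P where "P i = dl (c j i) (c (Suc j) (Suc i))" for i
    define Q where "Q i = dl (c (Suc j) i) (c j (Suc i))" for i
    have e1: "g2 (c j i) (c j (Suc (Suc i))) = P i + Q (Suc i)" for i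
      unfolding P_def Q_def
      by (rule two_step[symmetric]) (use js clt cl1 cl2 cl1s cl2s in auto)
    have e2: "g2 (c (Suc j) i) (c (Suc j) (Suc (Suc i))) = Q i + P (Suc i)" for i
      unfolding P_def Q_def
      by (rule two_step[symmetric]) (use js clt cl1 cl2 cl1s cl2s in auto)
    have pP: "P m = P 0" unfolding P_def using per[of _ 0] per[of _ 1] by simp
    have pQ: "Q m = Q 0" unfolding Q_def using per[of _ 0] per[of _ 1] by simp
    have "GS j = (\<Sum>i<m. P i) + (\<Sum>i<m. Q (Suc i))" unfolding GS_def e1 by (simp add: sum.distrib)
    also have "\<dots> = (\<Sum>i<m. P i) + (\<Sum>i<m. Q i)" using sum_shift_periodic[of Q, OF pQ] by simp
    finally have a1: "GS j = (\<Sum>i<m. P i) + (\<Sum>i<m. Q i)" .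
    have "GS (Suc j) = (\<Sum>i<m. Q i) + (\<Sum>i<m. P (Suc i))" unfolding GS_def e2 by (simp add: sum.distrib)
    also have "\<dots> = (\<Sum>i<m. Q i) + (\<Sum>i<m. P i)" using sum_shift_periodic[of P, OF pP] by simp
    finally show ?thesis using a1 by simp
  qed
  have allj: "\<forall>j. j \<le> s \<longrightarrow> GS j = GS 0"
  proof
    fix j show "j \<le> s \<longrightarrow> GS j = GS 0"
    proof (induction j)
      case 0 then show ?case by simp
    next
      case (Suc j) then show ?case using stepB[of j] by simp
    qed
  qed
  define D where "D i = dl (c 0 i) (c 0 (Suc i))" for i
  have eA: "g2 (c 0 i) (c 0 (Suc (Suc i))) = D i + D (Suc i)" for i
    unfolding D_def by (rule two_step[symmetric]) (use clt cb in auto)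
  have pD: "D m = D 0" unfolding D_def using per[of _ 0] per[of _ 1] by simp
  have "GS 0 = (\<Sum>i<m. D i) + (\<Sum>i<m. D (Suc i))" unfolding GS_def eA by (simp add: sum.distrib)
  also have "\<dots> = 2 * (\<Sum>i<m. D i)" using sum_shift_periodic[of D, OF pD] by simp
  finally have gs0: "GS 0 = 2 * (\<Sum>i<m. D i)" .
  define F where "F i = phi a (c s i)" for i
  have eC: "g2 (c s i) (c s (Suc (Suc i))) = 2 * (F (Suc (Suc i)) - F i)" for i
    unfolding F_def
  proof (rule g2_phi[OF ha])
    show "c s i < 3" "c s (Suc (Suc i)) < 3" using clt by auto
    show "c s i \<noteq> a" "c s (Suc (Suc i)) \<noteq> a" using htop m_pos unfolding c_def by auto
  qed
  have pF: "F m = F 0" "F (Suc m) = F 1" unfolding F_def using per[of _ 0] per[of _ 1] by auto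
  have "(\<Sum>i<m. F (Suc (Suc i))) = (\<Sum>i<m. F (Suc i))"
    using sum_shift_periodic[of "\<lambda>i. F (Suc i)"] pF by simp
  also have "\<dots> = (\<Sum>i<m. F i)" using sum_shift_periodic[of F] pF by simp
  finally have "GS s = 0" unfolding GS_def eC by (simp add: sum_subtractf sum_distrib_left[symmetric])
  then have "(\<Sum>i<m. D i) = 0" using allj gs0 by simp
  moreover have "even (\<Sum>i<m. D i) \<longleftrightarrow> even m" by (rule sum_pm_parity) (simp add: D_def dl_pm)
  ultimately show False using m_odd by simp
qed

end


context tg begin

definition adj1 :: "nat \<Rightarrow> nat \<Rightarrow> nat \<Rightarrow> nat \<Rightarrow> nat \<Rightarrow> nat \<Rightarrow> bool" where
  "adj1 g j i g' j' i' \<longleftrightarrow> (g' = g \<and> gadj j i j' i') \<or> (g' = g \<and> j = s \<and> j' = Suc s \<and> i' = i)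
     \<or> (g = 0 \<and> g' = 1 \<and> j = Suc s \<and> j' = Suc s)"

definition colS :: "nat \<Rightarrow> (nat \<Rightarrow> nat \<Rightarrow> nat) \<Rightarrow> nat \<Rightarrow> nat \<Rightarrow> nat \<Rightarrow> nat" where
  "colS g0 L g j i = (if g = g0 then (if j \<le> s then L j i else 0)
     else (if j \<le> s then beta 0 1 2 0 i else (if beta 0 1 2 0 i = 1 then 2 else 1)))"

lemma beta012_proper: "\<forall>i<m. beta 0 1 2 0 i \<noteq> beta 0 1 2 0 (Suc i mod m)"
  using beta_proper[of 0 1 2 0] m_pos by simp

lemma beta_lt: "x < 3 \<Longrightarrow> y < 3 \<Longrightarrow> z < 3 \<Longrightarrow> beta x y z d i < 3" by (rule beta_lt3)

lemma gadj_le: "gadj j i j' i' \<Longrightarrow> j \<le> s \<and> j' \<le> s" unfolding gadj_def by auto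

lemma side_good:
  fixes L :: "nat \<Rightarrow> nat \<Rightarrow> nat" and X :: "nat \<times> nat \<times> nat \<Rightarrow> nat \<times> nat \<times> nat \<Rightarrow> bool"
  assumes gz: "gz \<le> 1"
    and Lok: "\<And>j i j' i'. i < m \<Longrightarrow> i' < m \<Longrightarrow> gadj j i j' i' \<Longrightarrow> \<not> X (gz,j,i) (gz,j',i') \<Longrightarrow> L j i \<noteq> L j' i'"
    and Ltop: "\<And>i. i < m \<Longrightarrow> \<not> X (gz,s,i) (gz,Suc s,i) \<Longrightarrow> L s i \<noteq> 0"
    and hg: "g \<le> 1" "g' \<le> 1" and hi: "i < m" "i' < m"
    and adj: "adj1 g j i g' j' i'" and nX: "\<not> X (g,j,i) (g',j',i')"
  shows "colS gz L g j i \<noteq> colS gz L g' j' i'"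
proof -
  consider (a) "g' = g" "gadj j i j' i'" | (b) "g' = g" "j = s" "j' = Suc s" "i' = i"
    | (c) "g = 0" "g' = 1" "j = Suc s" "j' = Suc s"
    using adj unfolding adj1_def by blast
  then show ?thesis
  proof cases
    case a
    then have "j \<le> s" "j' \<le> s" using gadj_le by auto
    then show ?thesis
    proof (cases "g = gz")
      case True
      then show ?thesis using Lok[OF hi a(2)] nX a \<open>j \<le> s\<close> \<open>j' \<le> s\<close> unfolding colS_def by simp
    next
      case False
      then show ?thesis using copy_ok[OF beta012_proper a(2) hi] a \<open>j \<le> s\<close> \<open>j' \<le> s\<close>
        unfolding colS_def by simp
    qed
  next
    case b
    show ?thesis
    proof (cases "g = gz")
      case True
      then show ?thesis using Ltop[OF hi(1)] nX b unfolding colS_def by simp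
    next
      case False
      then show ?thesis using b unfolding colS_def by simp
    qed
  next
    case c
    have "beta 0 1 2 0 i' < 3" by (rule beta_lt) auto
    moreover have "beta 0 1 2 0 i < 3" by (rule beta_lt) auto
    ultimately show ?thesis using c gz unfolding colS_def by auto
  qed
qed

definition good :: "nat \<times> nat \<times> nat \<Rightarrow> nat \<times> nat \<times> nat \<Rightarrow> (nat \<Rightarrow> nat \<Rightarrow> nat \<Rightarrow> nat) \<Rightarrow> bool" where
  "good A B col \<longleftrightarrow> (\<forall>g j i. g \<le> 1 \<longrightarrow> j \<le> Suc s \<longrightarrow> i < m \<longrightarrow> col g j i < 3) \<and>
     (\<forall>g j i g' j' i'. g \<le> 1 \<longrightarrow> g' \<le> 1 \<longrightarrow> i < m \<longrightarrow> i' < m \<longrightarrow> adj1 g j i g' j' i' \<longrightarrow>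
        \<not> ((g,j,i) = A \<and> (g',j',i') = B) \<longrightarrow> \<not> ((g,j,i) = B \<and> (g',j',i') = A) \<longrightarrow>
        col g j i \<noteq> col g' j' i')"

lemma colS_lt:
  assumes "\<And>j i. L j i < 3" shows "colS g0 L g j i < 3"
  using assms beta_lt[of 0 1 2 0 i] unfolding colS_def by auto

lemma side_to_good:
  fixes L :: "nat \<Rightarrow> nat \<Rightarrow> nat"
  assumes g0: "g0 \<le> 1" and Llt: "\<And>j i. L j i < 3"
    and Lok: "\<And>j i j' i'. i < m \<Longrightarrow> i' < m \<Longrightarrow> gadj j i j' i' \<Longrightarrow>
       \<not> ((g0,j,i) = A \<and> (g0,j',i') = B \<or> (g0,j,i) = B \<and> (g0,j',i') = A) \<Longrightarrow> L j i \<noteq> L j' i'"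
    and Ltop: "\<And>i. i < m \<Longrightarrow>
       \<not> ((g0,s,i) = A \<and> (g0,Suc s,i) = B \<or> (g0,s,i) = B \<and> (g0,Suc s,i) = A) \<Longrightarrow> L s i \<noteq> 0"
  shows "good A B (colS g0 L)"
  unfolding good_def
proof (intro conjI allI impI)
  fix g j i :: nat assume "g \<le> 1" "j \<le> Suc s" "i < m"
  show "colS g0 L g j i < 3" by (rule colS_lt[OF Llt])
next
  fix g j i g' j' i' :: nat
  assume h: "g \<le> 1" "g' \<le> 1" "i < m" "i' < m" "adj1 g j i g' j' i'"
    "\<not> ((g,j,i) = A \<and> (g',j',i') = B)" "\<not> ((g,j,i) = B \<and> (g',j',i') = A)"
  show "colS g0 L g j i \<noteq> colS g0 L g' j' i'"
    by (rule side_good[where X = "\<lambda>x y. x = A \<and> y = B \<or> x = B \<and> y = A" and L = L and gz = g0 and g = g and j = j and i = i and g' = g' and j' = j' and i' = i', OF g0 Lok Ltop h(1-5)])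
       (use h in auto)
qed

definition col4 :: "nat \<Rightarrow> nat \<Rightarrow> nat \<Rightarrow> nat \<Rightarrow> nat \<Rightarrow> nat" where
  "col4 p q g j i = (if g = 0 then (if j \<le> s then beta 0 1 2 p i else (if i = p then 2 else 0))
      else (if j \<le> s then beta 1 0 2 q i else (if i = q then 2 else 1)))"

lemma good_K:
  assumes "p < m" "q < m"
  shows "good (0, Suc s, p) (1, Suc s, q) (col4 p q)"
  unfolding good_def
proof (intro conjI allI impI)
  fix g j i :: nat assume "g \<le> 1" "j \<le> Suc s" "i < m"
  show "col4 p q g j i < 3" unfolding col4_def using beta_lt[of 0 1 2 p i] beta_lt[of 1 0 2 q i] by auto
next
  fix g j i g' j' i' :: nat
  assume h: "g \<le> 1" "g' \<le> 1" "i < m" "i' < m" "adj1 g j i g' j' i'"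
    "\<not> ((g,j,i) = (0, Suc s, p) \<and> (g',j',i') = (1, Suc s, q))"
    "\<not> ((g,j,i) = (1, Suc s, q) \<and> (g',j',i') = (0, Suc s, p))"
  consider (a) "g' = g" "gadj j i j' i'" | (b) "g' = g" "j = s" "j' = Suc s" "i' = i"
    | (c) "g = 0" "g' = 1" "j = Suc s" "j' = Suc s"
    using h(5) unfolding adj1_def by blast
  then show "col4 p q g j i \<noteq> col4 p q g' j' i'"
  proof cases
    case a
    then have jj: "j \<le> s" "j' \<le> s" using gadj_le by auto
    have p1: "\<forall>i<m. beta 0 1 2 p i \<noteq> beta 0 1 2 p (Suc i mod m)" using beta_proper[of 0 1 2 p] assms by simp
    have p2: "\<forall>i<m. beta 1 0 2 q i \<noteq> beta 1 0 2 q (Suc i mod m)" using beta_proper[of 1 0 2 q] assms by simp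
    show ?thesis using copy_ok[OF p1 a(2) h(3,4)] copy_ok[OF p2 a(2) h(3,4)] a jj unfolding col4_def by simp
  next
    case b
    show ?thesis
    proof (cases "g = 0")
      case True
      then show ?thesis using b beta_at[OF assms(1), of 0 1 2] beta_ne[OF assms(1) h(3), of 0 1 2]
        unfolding col4_def by auto
    next
      case False
      then show ?thesis using b beta_at[OF assms(2), of 1 0 2] beta_ne[OF assms(2) h(3), of 1 0 2]
        unfolding col4_def by auto
    qed
  next
    case c
    then show ?thesis using h(6) unfolding col4_def by auto
  qed
qed

lemma good_exists:
  assumes hg: "g \<le> 1" "g' \<le> 1" and hi: "i < m" "i' < m" and adj: "adj1 g j i g' j' i'"
  shows "\<exists>col. good (g,j,i) (g',j',i') col"
proof -
  consider (a) "g' = g" "gadj j i j' i'" | (b) "g' = g" "j = s" "j' = Suc s" "i' = i"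
    | (c) "g = 0" "g' = 1" "j = Suc s" "j' = Suc s"
    using adj unfolding adj1_def by blast
  then show ?thesis
  proof cases
    case c
    then show ?thesis using good_K[OF hi] by auto
  next
    case b
    let ?L = "\<lambda>(j::nat) i. beta 0 1 2 i' i"
    have p1: "\<forall>i<m. beta 0 1 2 i' i \<noteq> beta 0 1 2 i' (Suc i mod m)" using beta_proper[of 0 1 2 i'] hi by simp
    have "good (g,j,i) (g',j',i') (colS g ?L)"
      apply (rule side_to_good[OF hg(1)])
      subgoal by (rule beta_lt) auto
      subgoal for ja ia jb ib using copy_ok[OF p1] by blast
      subgoal for ia using b beta_ne[OF hi(2) _, of ia 0 1 2] by fastforce
      done
    then show ?thesis by blast
  next
    case a
    show ?thesis
    proof (cases "j = 0 \<and> j' = 0")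
      case True
      then have ii: "i' = Suc i mod m" using a unfolding gadj_def by auto
      have "good (g,j,i) (g',j',i') (colS g (Lbase i))"
      proof (rule side_to_good[OF hg(1) Lbase_lt])
        fix ja ia jb ib assume hh: "ia < m" "ib < m" "gadj ja ia jb ib"
          "\<not> ((g, ja, ia) = (g, j, i) \<and> (g, jb, ib) = (g', j', i') \<or> (g, ja, ia) = (g', j', i') \<and> (g, jb, ib) = (g, j, i))"
        have "\<not> (ja = 0 \<and> jb = 0 \<and> ia = i)"
        proof
          assume "ja = 0 \<and> jb = 0 \<and> ia = i"
          then have "ib = Suc i mod m" using hh(3) unfolding gadj_def by auto
          then show False using hh(4) \<open>ja = 0 \<and> jb = 0 \<and> ia = i\<close> True a ii by auto
        qed
        then show "Lbase i ja ia \<noteq> Lbase i jb ib" using Lbase_ok[OF hi(1) hh(1,2,3)] by blast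
      next
        fix ia show "Lbase i s ia \<noteq> 0" by (rule Lbase_top)
      qed
      then show ?thesis by blast
    next
      case False
      then have jj: "j' = Suc j" "Suc j \<le> s" "R i i'" using a unfolding gadj_def by auto
      show ?thesis
      proof (cases "i' = Suc i mod m")
        case True
        have "good (g,j,i) (g',j',i') (colS g (LB j i))"
        proof (rule side_to_good[OF hg(1) LB_lt])
          fix ja ia jb ib assume hh: "ia < m" "ib < m" "gadj ja ia jb ib"
            "\<not> ((g, ja, ia) = (g, j, i) \<and> (g, jb, ib) = (g', j', i') \<or> (g, ja, ia) = (g', j', i') \<and> (g, jb, ib) = (g, j, i))"
          have "\<not> (ja = j \<and> ia = i \<and> jb = Suc j \<and> ib = Suc i mod m)"
            using hh(4) a jj True by auto
          then show "LB j i ja ia \<noteq> LB j i jb ib" using LB_ok[OF jj(2) hi(1) hh(1,2,3)] by blast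
        next
          fix ia show "LB j i s ia \<noteq> 0" using LB_top[OF jj(2) hi(1)] by blast
        qed
        then show ?thesis by blast
      next
        case False
        then have ie: "Suc i' mod m = i" using jj(3) unfolding R_def by auto
        have "good (g,j,i) (g',j',i') (colS g (LA j i))"
        proof (rule side_to_good[OF hg(1) LA_lt])
          fix ja ia jb ib assume hh: "ia < m" "ib < m" "gadj ja ia jb ib"
            "\<not> ((g, ja, ia) = (g, j, i) \<and> (g, jb, ib) = (g', j', i') \<or> (g, ja, ia) = (g', j', i') \<and> (g, jb, ib) = (g, j, i))"
          have "\<not> (ja = j \<and> ia = i \<and> jb = Suc j \<and> Suc ib mod m = i)"
          proof
            assume h5: "ja = j \<and> ia = i \<and> jb = Suc j \<and> Suc ib mod m = i"
            then have "ib = i'" using suc_mod_inj[OF hh(2) hi(2)] ie by simp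
            then show False using hh(4) h5 a jj by auto
          qed
          then show "LA j i ja ia \<noteq> LA j i jb ib" using LA_ok[OF jj(2) hi(1) hh(1,2,3)] by blast
        next
          fix ia show "LA j i s ia \<noteq> 0" using LA_top[OF jj(2) hi(1)] by blast
        qed
        then show ?thesis by blast
      qed
    qed
  qed
qed

end


context tg begin

definition MM :: nat where "MM = (s + 2) * m"
definition nn :: nat where "nn = 2 * MM"
definition GG :: "nat \<Rightarrow> nat" where "GG v = v div MM"
definition JJ :: "nat \<Rightarrow> nat" where "JJ v = v mod MM div m"
definition II :: "nat \<Rightarrow> nat" where "II v = v mod m"
definition enc :: "nat \<Rightarrow> nat \<Rightarrow> nat \<Rightarrow> nat" where "enc g j i = g * MM + j * m + i"

definition adjT :: "nat \<Rightarrow> nat \<Rightarrow> nat \<Rightarrow> nat \<Rightarrow> nat \<Rightarrow> nat \<Rightarrow> bool" where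
  "adjT g j i g' j' i' \<longleftrightarrow> adj1 g j i g' j' i' \<or> adj1 g' j' i' g j i"

definition EE :: "nat \<Rightarrow> nat \<Rightarrow> bool" where
  "EE u v \<longleftrightarrow> u < nn \<and> v < nn \<and> adjT (GG u) (JJ u) (II u) (GG v) (JJ v) (II v)"

lemma MM_pos: "0 < MM" unfolding MM_def using m_pos by simp

lemma m_dvd_MM: "m dvd MM" unfolding MM_def by simp

lemma vbound: assumes "v < nn" shows "GG v \<le> 1" "JJ v \<le> Suc s" "II v < m"
proof -
  show "GG v \<le> 1" using assms unfolding GG_def nn_def
    by (metis One_nat_def Suc_1 le_eq_less_or_eq less_Suc_eq_le less_mult_imp_div_less)
  have "v mod MM < (s + 2) * m" using MM_pos unfolding MM_def by simp
  then have "v mod MM div m < s + 2" by (simp add: div_less_iff_less_mult m_pos)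
  then show "JJ v \<le> Suc s" unfolding JJ_def by simp
  show "II v < m" unfolding II_def using m_pos by simp
qed

lemma vdecomp: "v = GG v * MM + JJ v * m + II v"
proof -
  have "v = v div MM * MM + v mod MM" by (rule div_mult_mod_eq[symmetric])
  moreover have "v mod MM = v mod MM div m * m + v mod MM mod m" by (rule div_mult_mod_eq[symmetric])
  moreover have "v mod MM mod m = v mod m" using m_dvd_MM by (simp add: mod_mod_cancel)
  ultimately show ?thesis unfolding GG_def JJ_def II_def by linarith
qed

lemma vinj: "GG u = GG v \<Longrightarrow> JJ u = JJ v \<Longrightarrow> II u = II v \<Longrightarrow> u = v"
  using vdecomp[of u] vdecomp[of v] by simp

lemma enc_dec:
  assumes "j \<le> Suc s" "i < m"
  shows "GG (enc g j i) = g" "JJ (enc g j i) = j" "II (enc g j i) = i"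
proof -
  have lt: "j * m + i < MM"
  proof -
    have "j * m + i < j * m + m" using assms by simp
    also have "\<dots> = Suc j * m" by simp
    also have "\<dots> \<le> (s + 2) * m" using assms by (intro mult_right_mono) auto
    finally show ?thesis unfolding MM_def .
  qed
  have e: "enc g j i = g * MM + (j * m + i)" unfolding enc_def by simp
  have d1: "(g * MM + (j * m + i)) div MM = g + (j * m + i) div MM"
    by (rule div_mult_self3) (use MM_pos in simp)
  have d2: "(j * m + i) div MM = 0" using lt by (rule div_less)
  show "GG (enc g j i) = g" unfolding GG_def e d1 d2 by simp
  have d3: "(g * MM + (j * m + i)) mod MM = (j * m + i) mod MM" by (rule mod_mult_self3)
  have d4: "(j * m + i) mod MM = j * m + i" using lt by (rule mod_less)
  have d5: "(j * m + i) div m = j + i div m" by (rule div_mult_self3) (use m_pos in simp)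
  have d6: "i div m = 0" using assms(2) by (rule div_less)
  show "JJ (enc g j i) = j" unfolding JJ_def e d3 d4 d5 d6 by simp
  have e2: "enc g j i = (g * (s + 2) + j) * m + i" unfolding enc_def MM_def by (simp add: algebra_simps)
  have d7: "((g * (s + 2) + j) * m + i) mod m = i mod m" by (rule mod_mult_self3)
  show "II (enc g j i) = i" unfolding II_def e2 d7 using assms(2) by (rule mod_less)
qed

lemma enc_lt: assumes "g \<le> 1" "j \<le> Suc s" "i < m" shows "enc g j i < nn"
proof -
  have lt: "j * m + i < MM"
  proof -
    have "j * m + i < Suc j * m" using assms by simp
    also have "\<dots> \<le> (s + 2) * m" using assms by (intro mult_right_mono) auto
    finally show ?thesis unfolding MM_def .
  qed
  have e: "enc g j i = g * MM + (j * m + i)" unfolding enc_def by simp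
  have "g * MM \<le> 1 * MM" using assms(1) by (rule mult_right_mono) simp
  then have "g * MM + (j * m + i) < 2 * MM" using lt by linarith
  then show ?thesis unfolding e nn_def .
qed

lemma adj1_irrefl: "i < m \<Longrightarrow> \<not> adj1 g j i g j i"
proof
  assume h: "i < m" "adj1 g j i g j i"
  then have "i = Suc i mod m" unfolding adj1_def gadj_def by auto
  moreover have "Suc i mod m \<noteq> i"
  proof (cases "Suc i < m")
    case True then show ?thesis by simp
  next
    case False then have "Suc i = m" using h(1) by simp
    then show ?thesis using m_ge by simp
  qed
  ultimately show False by simp
qed

lemma graph_EE: "graph nn EE"
  unfolding graph_def
proof (intro allI impI conjI)
  fix u v assume h: "EE u v"
  show "u < nn" "v < nn" using h unfolding EE_def by auto
  show "EE v u" using h unfolding EE_def adjT_def by blast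
  show "u \<noteq> v"
  proof
    assume "u = v"
    then have "adj1 (GG u) (JJ u) (II u) (GG u) (JJ u) (II u)" using h unfolding EE_def adjT_def by blast
    then show False using adj1_irrefl[OF vbound(3)[OF \<open>u < nn\<close>]] by blast
  qed
qed

lemma remove_edge_sym: "remove_edge E a b = remove_edge E b a"
  unfolding remove_edge_def by (intro ext) auto

lemma good_colorable:
  assumes g: "good (GG a, JJ a, II a) (GG b, JJ b, II b) col" and ab: "a < nn" "b < nn"
  shows "colorable nn (remove_edge EE a b) 3"
  unfolding colorable_def
proof (rule exI[where x = "\<lambda>v. col (GG v) (JJ v) (II v)"], intro conjI allI impI)
  let ?f = "\<lambda>v. col (GG v) (JJ v) (II v)"
  fix v assume "v < nn"
  then show "?f v < 3" using g vbound[of v] unfolding good_def by blast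
next
  let ?f = "\<lambda>v. col (GG v) (JJ v) (II v)"
  fix u v assume h: "remove_edge EE a b u v"
  then have e: "EE u v" and ne: "\<not> (u = a \<and> v = b)" "\<not> (u = b \<and> v = a)" unfolding remove_edge_def by auto
  have uv: "u < nn" "v < nn" using e unfolding EE_def by auto
  note bu = vbound[OF uv(1)] and bv = vbound[OF uv(2)]
  have g2: "\<And>g j i g' j' i'. g \<le> 1 \<Longrightarrow> g' \<le> 1 \<Longrightarrow> i < m \<Longrightarrow> i' < m \<Longrightarrow> adj1 g j i g' j' i' \<Longrightarrow>
        \<not> ((g,j,i) = (GG a, JJ a, II a) \<and> (g',j',i') = (GG b, JJ b, II b)) \<Longrightarrow>
        \<not> ((g,j,i) = (GG b, JJ b, II b) \<and> (g',j',i') = (GG a, JJ a, II a)) \<Longrightarrow> col g j i \<noteq> col g' j' i'"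
    using g unfolding good_def by blast
  have n1: "\<not> ((GG u, JJ u, II u) = (GG a, JJ a, II a) \<and> (GG v, JJ v, II v) = (GG b, JJ b, II b))"
    using ne vinj by blast
  have n2: "\<not> ((GG u, JJ u, II u) = (GG b, JJ b, II b) \<and> (GG v, JJ v, II v) = (GG a, JJ a, II a))"
    using ne vinj by blast
  have "adjT (GG u) (JJ u) (II u) (GG v) (JJ v) (II v)" using e unfolding EE_def by simp
  then show "?f u \<noteq> ?f v"
    unfolding adjT_def
  proof
    assume "adj1 (GG u) (JJ u) (II u) (GG v) (JJ v) (II v)"
    then show ?thesis using g2[OF bu(1) bv(1) bu(3) bv(3)] n1 n2 by blast
  next
    assume "adj1 (GG v) (JJ v) (II v) (GG u) (JJ u) (II u)"
    then have "col (GG v) (JJ v) (II v) \<noteq> col (GG u) (JJ u) (II u)"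
      using g2[OF bv(1) bu(1) bv(3) bu(3)] n1 n2 by blast
    then show ?thesis by simp
  qed
qed

lemma crit_edges: "EE a b \<Longrightarrow> colorable nn (remove_edge EE a b) 3"
proof -
  assume e: "EE a b"
  have ab: "a < nn" "b < nn" using e unfolding EE_def by auto
  note ba = vbound[OF ab(1)] and bb = vbound[OF ab(2)]
  have "adjT (GG a) (JJ a) (II a) (GG b) (JJ b) (II b)" using e unfolding EE_def by simp
  then show ?thesis unfolding adjT_def
  proof
    assume "adj1 (GG a) (JJ a) (II a) (GG b) (JJ b) (II b)"
    then obtain col where "good (GG a, JJ a, II a) (GG b, JJ b, II b) col"
      using good_exists ba bb by blast
    then show ?thesis using good_colorable ab by blast
  next
    assume "adj1 (GG b) (JJ b) (II b) (GG a) (JJ a) (II a)"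
    then obtain col where "good (GG b, JJ b, II b) (GG a, JJ a, II a) col"
      using good_exists ba bb by blast
    then have "colorable nn (remove_edge EE b a) 3" using good_colorable ab by blast
    then show ?thesis using remove_edge_sym by metis
  qed
qed

definition c4 :: "nat \<Rightarrow> nat \<Rightarrow> nat \<Rightarrow> nat" where
  "c4 g j i = (if j \<le> s then beta 0 1 2 0 i else if g = 0 then 3 else (if beta 0 1 2 0 i = 1 then 2 else 1))"

lemma colorable4: "colorable nn EE 4"
  unfolding colorable_def
proof (rule exI[where x = "\<lambda>v. c4 (GG v) (JJ v) (II v)"], intro conjI allI impI)
  let ?f = "\<lambda>v. c4 (GG v) (JJ v) (II v)"
  fix v assume "v < nn"
  show "?f v < 4" unfolding c4_def using beta_lt[of 0 1 2 0 "II v"] by auto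
next
  have key: "c4 g j i \<noteq> c4 g' j' i'" if h: "g \<le> 1" "g' \<le> 1" "i < m" "i' < m" "adj1 g j i g' j' i'" for g j i g' j' i'
  proof -
    consider (a) "g' = g" "gadj j i j' i'" | (b) "g' = g" "j = s" "j' = Suc s" "i' = i"
      | (c) "g = 0" "g' = 1" "j = Suc s" "j' = Suc s"
      using h(5) unfolding adj1_def by blast
    then show ?thesis
    proof cases
      case a
      then have "j \<le> s" "j' \<le> s" using gadj_le by auto
      then show ?thesis using copy_ok[OF beta012_proper a(2) h(3,4)] unfolding c4_def by simp
    next
      case b
      then show ?thesis using beta_lt[of 0 1 2 0 i] unfolding c4_def by auto
    next
      case c
      then show ?thesis unfolding c4_def by auto
    qed
  qed
  let ?f = "\<lambda>v. c4 (GG v) (JJ v) (II v)"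
  fix u v assume e: "EE u v"
  have uv: "u < nn" "v < nn" using e unfolding EE_def by auto
  note bu = vbound[OF uv(1)] and bv = vbound[OF uv(2)]
  have "adjT (GG u) (JJ u) (II u) (GG v) (JJ v) (II v)" using e unfolding EE_def by simp
  then show "?f u \<noteq> ?f v" unfolding adjT_def
  proof
    assume "adj1 (GG u) (JJ u) (II u) (GG v) (JJ v) (II v)"
    then show ?thesis using key[OF bu(1) bv(1) bu(3) bv(3)] by simp
  next
    assume "adj1 (GG v) (JJ v) (II v) (GG u) (JJ u) (II u)"
    then have "c4 (GG v) (JJ v) (II v) \<noteq> c4 (GG u) (JJ u) (II u)" using key[OF bv(1) bu(1) bv(3) bu(3)] by simp
    then show ?thesis by (rule not_sym)
  qed
qed

lemma pig: assumes "(a::nat) < 3" "b < 3" "c < 3" "d < 3" "a \<noteq> b" "c \<noteq> d" "a \<noteq> c" "a \<noteq> d" "b \<noteq> c" "b \<noteq> d"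
  shows False
  using assms by presburger

lemma not_colorable3: "\<not> colorable nn EE 3"
proof
  assume "colorable nn EE 3"
  then obtain f :: "nat \<Rightarrow> nat" where flt: "\<forall>v<nn. f v < 3" and fp: "\<forall>u v. EE u v \<longrightarrow> f u \<noteq> f v"
    unfolding colorable_def by blast
  define col where "col g j i = f (enc g j i)" for g j i
  have cp: "col g j i \<noteq> col g' j' i'" if h: "g \<le> 1" "g' \<le> 1" "j \<le> Suc s" "j' \<le> Suc s" "i < m" "i' < m"
     "adj1 g j i g' j' i'" for g j i g' j' i'
  proof -
    have "EE (enc g j i) (enc g' j' i')"
      unfolding EE_def adjT_def using enc_lt enc_dec h by simp
    then show ?thesis using fp unfolding col_def by blast
  qed
  have clt: "col g j i < 3" if "g \<le> 1" "j \<le> Suc s" "i < m" for g j i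
    using flt enc_lt that unfolding col_def by blast
  have mono: "(\<forall>i<m. col 0 (Suc s) i = col 0 (Suc s) 0) \<or> (\<forall>i<m. col 1 (Suc s) i = col 1 (Suc s) 0)"
  proof (rule ccontr)
    assume "\<not> ?thesis"
    then obtain i k where ik: "i < m" "k < m" "col 0 (Suc s) i \<noteq> col 0 (Suc s) 0" "col 1 (Suc s) k \<noteq> col 1 (Suc s) 0"
      by blast
    have K: "col 0 (Suc s) a \<noteq> col 1 (Suc s) b" if "a < m" "b < m" for a b
      using cp[of 0 1 "Suc s" "Suc s" a b] that unfolding adj1_def by simp
    have x: "col 0 (Suc s) i < 3" "col 0 (Suc s) 0 < 3" "col 1 (Suc s) k < 3" "col 1 (Suc s) 0 < 3"
      using clt ik m_pos by auto
    show False by (rule pig[OF x ik(3) ik(4) K[OF ik(1) ik(2)] K[OF ik(1) m_pos] K[OF m_pos ik(2)] K[OF m_pos m_pos]])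
  qed
  obtain g where g: "g \<le> 1" "\<forall>i<m. col g (Suc s) i = col g (Suc s) 0"
  proof (cases "\<forall>i<m. col 0 (Suc s) i = col 0 (Suc s) 0")
    case True then show ?thesis using that[of 0] by blast
  next
    case False then show ?thesis using that[of 1] mono by blast
  qed
  define L where "L j i = col g j i" for j i
  show False
  proof (rule winding[of L "col g (Suc s) 0"])
    show "\<forall>j\<le>s. \<forall>i<m. L j i < 3" unfolding L_def using clt g(1) by simp
    show "col g (Suc s) 0 < 3" using clt g(1) m_pos by simp
    show "\<forall>i<m. L 0 i \<noteq> L 0 (Suc i mod m)"
    proof (intro allI impI)
      fix i assume i: "i < m"
      have a: "adj1 g 0 i g 0 (Suc i mod m)" unfolding adj1_def gadj_def by simp
      show "L 0 i \<noteq> L 0 (Suc i mod m)" unfolding L_def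
        by (rule cp[OF g(1) g(1) _ _ i suc_mod_lt a]) simp_all
    qed
    show "\<forall>j<s. \<forall>i<m. L (Suc j) i \<noteq> L j (Suc i mod m) \<and> L (Suc j) (Suc i mod m) \<noteq> L j i"
    proof (intro allI impI conjI)
      fix j i assume j: "j < s" and i: "i < m"
      have a1: "adj1 g j (Suc i mod m) g (Suc j) i" unfolding adj1_def gadj_def R_def using j by simp
      have "L j (Suc i mod m) \<noteq> L (Suc j) i" unfolding L_def
        by (rule cp[OF g(1) g(1) _ _ suc_mod_lt i a1]) (use j in simp_all)
      then show "L (Suc j) i \<noteq> L j (Suc i mod m)" by (rule not_sym)
      have a2: "adj1 g j i g (Suc j) (Suc i mod m)" unfolding adj1_def gadj_def R_def using j by simp
      have "L j i \<noteq> L (Suc j) (Suc i mod m)" unfolding L_def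
        by (rule cp[OF g(1) g(1) _ _ i suc_mod_lt a2]) (use j in simp_all)
      then show "L (Suc j) (Suc i mod m) \<noteq> L j i" by (rule not_sym)
    qed
    show "\<forall>i<m. L s i \<noteq> col g (Suc s) 0"
    proof (intro allI impI)
      fix i assume i: "i < m"
      have a: "adj1 g s i g (Suc s) i" unfolding adj1_def by simp
      have "L s i \<noteq> col g (Suc s) i" unfolding L_def
        by (rule cp[OF g(1) g(1) _ _ i i a]) simp_all
      moreover have "col g (Suc s) i = col g (Suc s) 0" using g(2) i by blast
      ultimately show "L s i \<noteq> col g (Suc s) 0" by metis
    qed
  qed
qed

lemma colorable_mono: "colorable n E k \<Longrightarrow> k \<le> k' \<Longrightarrow> colorable n E k'"
proof -
  assume "colorable n E k" "k \<le> k'"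
  then obtain f :: "nat \<Rightarrow> nat" where "\<forall>v<n. f v < k" "\<forall>u v. E u v \<longrightarrow> f u \<noteq> f v"
    unfolding colorable_def by blast
  then show "colorable n E k'" unfolding colorable_def using \<open>k \<le> k'\<close>
    by (intro exI[of _ f]) (auto intro: less_le_trans)
qed

lemma chrom4: "chromatic_number nn EE = 4"
  unfolding chromatic_number_def
proof (rule Least_equality)
  show "colorable nn EE 4" by (rule colorable4)
  fix y assume "colorable nn EE y"
  show "4 \<le> y"
  proof (rule ccontr)
    assume "\<not> 4 \<le> y"
    then have "y \<le> 3" by simp
    then have "colorable nn EE 3" using colorable_mono[OF \<open>colorable nn EE y\<close>] by blast
    then show False using not_colorable3 by simp
  qed
qed

lemma critical4: "critical 4 nn EE"
  unfolding critical_def using graph_EE chrom4 crit_edges by simp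

end


context tg begin

lemma R_sym: "R i i' \<Longrightarrow> R i' i" unfolding R_def by auto

lemma adjT_J: "adjT g j i g' j' i' \<Longrightarrow> j' \<le> Suc j"
  unfolding adjT_def adj1_def gadj_def by auto

lemma adjT_par: "adjT g j i g' j' i' \<Longrightarrow> g \<le> 1 \<Longrightarrow> g' \<le> 1 \<Longrightarrow> \<not> (j = 0 \<and> j' = 0) \<Longrightarrow> even (g + j) \<noteq> even (g' + j')"
  unfolding adjT_def adj1_def gadj_def by auto

lemma adjT_idx: "adjT g j i g' j' i' \<Longrightarrow> j \<le> s \<Longrightarrow> j' \<le> s \<Longrightarrow> R i i'"
  unfolding adjT_def adj1_def gadj_def using R_sym by (auto simp: R_def)

lemma adjT_top: "adjT g j i g' j' i' \<Longrightarrow> j = Suc s \<Longrightarrow> j' \<le> s \<Longrightarrow> g' = g \<and> j' = s \<and> i' = i"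
  unfolding adjT_def adj1_def gadj_def by auto

lemma R_cong:
  assumes "i < m" "i' < m" "R i i'"
  shows "int m dvd (int i' - int i - (if i' = Suc i mod m then 1 else -1))"
proof (cases "i' = Suc i mod m")
  case True
  show ?thesis
  proof (cases "Suc i < m")
    case True2: True
    then show ?thesis using True by simp
  next
    case False
    then have "Suc i = m" using assms by simp
    then have "i' = 0" using True by simp
    then have "int i' - int i - 1 = - int m" using \<open>Suc i = m\<close> by simp
    then show ?thesis using True by simp
  qed
next
  case False
  then have h: "i = Suc i' mod m" using assms unfolding R_def by simp
  show ?thesis
  proof (cases "Suc i' < m")
    case True
    then show ?thesis using h False by simp
  next
    case False2: False
    then have "Suc i' = m" using assms by simp
    then have "i = 0" using h by simp
    then have "int i' - int i + 1 = int m" using \<open>Suc i' = m\<close> by simp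
    then show ?thesis using False by simp
  qed
qed

lemma girth:
  assumes lm: "l < m" and ls: "l < 2 * s + 5"
  shows "odd_girth_gt nn EE l"
  unfolding odd_girth_gt_def
proof (intro allI impI)
  fix cs assume "is_cycle nn EE cs \<and> odd (length cs)"
  then have cyc: "is_cycle nn EE cs" and Lodd: "odd (length cs)" by auto
  define L where "L = length cs"
  have L3: "3 \<le> L" and dist: "distinct cs" and sub: "set cs \<subseteq> {..<nn}"
    and ed: "\<forall>i<L. EE (cs ! i) (cs ! ((i + 1) mod L))"
    using cyc unfolding is_cycle_def L_def by auto
  have Lpos: "0 < L" using L3 by simp
  show "l < length cs"
  proof (rule ccontr)
    assume "\<not> l < length cs"
    then have Lm: "L < m" using lm unfolding L_def by simp
    define v where "v k = cs ! (k mod L)" for k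
    have vlt: "v k < nn" for k
    proof -
      have "cs ! (k mod L) \<in> set cs" using Lpos unfolding L_def by simp
      then show ?thesis using sub unfolding v_def by auto
    qed
    have vE: "EE (v k) (v (Suc k))" for k
    proof -
      have "EE (cs ! (k mod L)) (cs ! ((k mod L + 1) mod L))" using ed Lpos by simp
      moreover have "(k mod L + 1) mod L = Suc k mod L" by (simp add: mod_Suc_eq)
      ultimately show ?thesis unfolding v_def by simp
    qed
    have vEs: "EE (v (Suc k)) (v k)" for k using vE graph_EE unfolding graph_def by blast
    have vmod: "v (k mod L) = v k" for k unfolding v_def by simp
    have vsm: "v (Suc (k mod L)) = v (Suc k)" for k unfolding v_def by (simp add: mod_Suc_eq)
    have vper: "v (k + L) = v k" for k unfolding v_def by simp
    have vdist: "a mod L = b mod L" if "v a = v b" for a b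
      using that nth_eq_iff_index_eq[OF dist] Lpos unfolding v_def L_def by simp
    define J where "J k = JJ (v k)" for k
    have adjv: "adjT (GG (v k)) (J k) (II (v k)) (GG (v (Suc k))) (J (Suc k)) (II (v (Suc k)))" for k
      using vE[of k] unfolding EE_def J_def by simp
    have adjv': "adjT (GG (v (Suc k))) (J (Suc k)) (II (v (Suc k))) (GG (v k)) (J k) (II (v k))" for k
      using vEs[of k] unfolding EE_def J_def by simp
    have Jup: "J (Suc k) \<le> Suc (J k)" for k using adjT_J[OF adjv] .
    have Jdn: "J k \<le> Suc (J (Suc k))" for k using adjT_J[OF adjv'] .
    have lip1: "J (k + t) \<le> J k + t" for k t
    proof (induction t)
      case 0 then show ?case by simp
    next
      case (Suc t)
      have "J (Suc (k + t)) \<le> Suc (J (k + t))" by (rule Jup)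
      then show ?case using Suc by simp
    qed
    have lip2: "J k \<le> J (k + t) + t" for k t
    proof (induction t)
      case 0 then show ?case by simp
    next
      case (Suc t)
      have "J (k + t) \<le> Suc (J (Suc (k + t)))" by (rule Jdn)
      then show ?case using Suc by simp
    qed
    have Jle: "J k \<le> Suc s" for k using vbound(2)[OF vlt] unfolding J_def .
    show False
    proof (cases "\<exists>k. J k = Suc s")
      case True
      then obtain k1 where k1: "J k1 = Suc s" by blast
      have base: "\<exists>k. J k = 0 \<and> J (Suc k) = 0"
      proof (rule ccontr)
        assume nb: "\<not> ?thesis"
        define p where "p k = even (GG (v k) + J k)" for k
        have pstep: "p (Suc k) \<longleftrightarrow> \<not> p k" for k
        proof -
          have "\<not> (J k = 0 \<and> J (Suc k) = 0)" using nb by blast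
          then have "even (GG (v k) + J k) \<noteq> even (GG (v (Suc k)) + J (Suc k))"
            by (rule adjT_par[OF adjv vbound(1)[OF vlt] vbound(1)[OF vlt]])
          then show ?thesis unfolding p_def by blast
        qed
        have pk: "p k \<longleftrightarrow> (p 0 \<longleftrightarrow> even k)" for k
        proof (induction k)
          case 0 then show ?case by simp
        next
          case (Suc k) then show ?case using pstep[of k] by simp
        qed
        have "p L = p 0" unfolding p_def J_def using vper[of 0] by simp
        then have "even L" using pk[of L] by blast
        then show False using Lodd unfolding L_def by simp
      qed
      then obtain k0' where k0': "J k0' = 0" "J (Suc k0') = 0" by blast
      define k0 where "k0 = k0' mod L"
      have k0: "J k0 = 0" "J (Suc k0) = 0" "k0 < L"
        unfolding k0_def J_def using k0'[unfolded J_def] vmod[of k0'] vsm[of k0'] Lpos by simp_all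
      define k1a where "k1a = k1 mod L"
      have k1a: "J k1a = Suc s" "k1a < L" unfolding k1a_def J_def using k1[unfolded J_def] vmod[of k1] Lpos by simp_all
      define k2 where "k2 = (if k0 < k1a then k1a else k1a + L)"
      have J2: "J k2 = Suc s" using k1a vper unfolding k2_def J_def by simp
      have "k1a \<noteq> k0" using k0(1) k1a(1) by auto
      then have k2r: "k0 < k2" "k2 < k0 + L" using k0 k1a unfolding k2_def by auto
      have JL: "J (k0 + L) = 0" using k0(1) vper[of k0] unfolding J_def by simp
      have k2r2: "Suc k0 < k2" using k2r J2 k0 by (metis Suc_lessI nat.simps(3))
      define a where "a = k2 - Suc k0"
      define b where "b = k0 + L - k2"
      have ea: "k2 = Suc k0 + a" and eb: "k2 + b = k0 + L" using k2r k2r2 unfolding a_def b_def by auto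
      have "J k2 \<le> J (Suc k0) + a" using lip1[of "Suc k0" a] ea by simp
      then have ga: "Suc s \<le> a" using J2 k0 by simp
      have "J k2 \<le> J (k2 + b) + b" by (rule lip2)
      then have gb: "Suc s \<le> b" using J2 JL eb by simp
      have Lab: "L = a + b + 1" using ea eb by simp
      have "L = 2 * s + 3"
      proof (rule ccontr)
        assume "L \<noteq> 2 * s + 3"
        then have "L \<ge> 2 * s + 5" using Lab ga gb Lodd unfolding L_def by presburger
        then show False using \<open>\<not> l < length cs\<close> ls unfolding L_def by simp
      qed
      then have ab: "a = Suc s" "b = Suc s" using Lab ga gb by auto
      have k2pos: "k2 = Suc (k2 - 1)" using k2r2 by simp
      have "J (k2 - 1) \<le> J (Suc k0) + s" using lip1[of "Suc k0" s] ea ab by simp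
      then have Jm: "J (k2 - 1) \<le> s" using k0 by simp
      have "J (Suc k2) \<le> J (Suc k2 + s) + s" by (rule lip2)
      moreover have "Suc k2 + s = k0 + L" using eb ab by simp
      ultimately have Jp: "J (Suc k2) \<le> s" using JL by simp
      have t1: "GG (v (k2 - 1)) = GG (v k2) \<and> J (k2 - 1) = s \<and> II (v (k2 - 1)) = II (v k2)"
        using adjT_top[OF adjv'[of "k2 - 1"]] k2pos J2 Jm by simp
      have t2: "GG (v (Suc k2)) = GG (v k2) \<and> J (Suc k2) = s \<and> II (v (Suc k2)) = II (v k2)"
        using adjT_top[OF adjv[of k2] J2 Jp] by simp
      have "v (k2 - 1) = v (Suc k2)" using t1 t2 vinj unfolding J_def by metis
      then have "(k2 - 1) mod L = (Suc k2) mod L" by (rule vdist)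
      then have "L dvd (Suc k2 - (k2 - 1))" using mod_eq_dvd_iff_nat[of "k2 - 1" "Suc k2" L] by simp
      moreover have "Suc k2 - (k2 - 1) = 2" using k2pos by simp
      ultimately have "L dvd 2" by simp
      then have "L \<le> 2" by (rule dvd_imp_le) simp
      then show False using L3 by simp
    next
      case False
      then have Js: "J k \<le> s" for k using Jle by (metis le_SucE)
      have Rk: "R (II (v k)) (II (v (Suc k)))" for k using adjT_idx[OF adjv Js Js] .
      define dd where "dd k = (if II (v (Suc k)) = Suc (II (v k)) mod m then 1 else (-1::int))" for k
      define df where "df k = int (II (v k))" for k
      have cg: "int m dvd (df (Suc k) - df k - dd k)" for k
        unfolding df_def dd_def by (rule R_cong[OF vbound(3)[OF vlt] vbound(3)[OF vlt] Rk])
      have tel: "(\<Sum>k<L. df (Suc k) - df k) = 0"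
        using sum_lessThan_telescope[of df L] vper[of 0] unfolding df_def by simp
      have "int m dvd (\<Sum>k<L. df (Suc k) - df k - dd k)" by (rule dvd_sum) (use cg in blast)
      moreover have "(\<Sum>k<L. df (Suc k) - df k - dd k) = - (\<Sum>k<L. dd k)"
        using tel by (simp add: sum_subtractf)
      ultimately have mdv: "int m dvd (\<Sum>k<L. dd k)" by simp
      have pm: "\<forall>k<L. dd k = 1 \<or> dd k = -1" unfolding dd_def by auto
      have "\<bar>\<Sum>k<L. dd k\<bar> \<le> int L" by (rule sum_pm_abs[OF pm])
      then have "\<bar>\<Sum>k<L. dd k\<bar> < int m" using Lm by simp
      then have "(\<Sum>k<L. dd k) = 0"
      proof -
        assume lt: "\<bar>\<Sum>k<L. dd k\<bar> < int m"
        show ?thesis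
        proof (rule ccontr)
          assume "(\<Sum>k<L. dd k) \<noteq> 0"
          then have "\<bar>int m\<bar> \<le> \<bar>\<Sum>k<L. dd k\<bar>" using dvd_imp_le_int mdv by blast
          then show False using lt by simp
        qed
      qed
      moreover have "even (\<Sum>k<L. dd k) \<longleftrightarrow> even L" by (rule sum_pm_parity[OF pm])
      ultimately show False using Lodd unfolding L_def by simp
    qed
  qed
qed

end


context tg begin

lemma num_edges_ge: "m * m \<le> num_edges nn EE"
proof -
  let ?f = "\<lambda>(i, k). (enc 0 (Suc s) i, enc 1 (Suc s) k)"
  let ?B = "{(u, v). u < v \<and> v < nn \<and> EE u v}"
  have inj: "inj_on ?f ({..<m} \<times> {..<m})"
  proof (rule inj_onI)
    fix x y assume "x \<in> {..<m} \<times> {..<m}" "y \<in> {..<m} \<times> {..<m}" "?f x = ?f y"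
    then obtain i k i' k' where "x = (i, k)" "y = (i', k')" "i < m" "k < m" "i' < m" "k' < m"
      "enc 0 (Suc s) i = enc 0 (Suc s) i'" "enc 1 (Suc s) k = enc 1 (Suc s) k'" by auto
    note h = this
    have "II (enc 0 (Suc s) i) = II (enc 0 (Suc s) i')" using h(7) by (rule arg_cong)
    then have "i = i'" using enc_dec(3)[of "Suc s" i 0] enc_dec(3)[of "Suc s" i' 0] h(3,5) by simp
    moreover have "II (enc 1 (Suc s) k) = II (enc 1 (Suc s) k')" using h(8) by (rule arg_cong)
    then have "k = k'" using enc_dec(3)[of "Suc s" k 1] enc_dec(3)[of "Suc s" k' 1] h(4,6) by simp
    ultimately show "x = y" using h(1,2) by simp
  qed
  have sub: "?f ` ({..<m} \<times> {..<m}) \<subseteq> ?B"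
  proof
    fix x assume "x \<in> ?f ` ({..<m} \<times> {..<m})"
    then obtain i k where ik: "i < m" "k < m" "x = (enc 0 (Suc s) i, enc 1 (Suc s) k)" by auto
    have "Suc s * m + i < Suc s * m + m" using ik by simp
    also have "Suc s * m + m = MM" unfolding MM_def by simp
    finally have "Suc s * m + i < MM" .
    then have l1: "enc 0 (Suc s) i < enc 1 (Suc s) k" unfolding enc_def by simp
    have l2: "enc 1 (Suc s) k < nn" using enc_lt[of 1 "Suc s" k] ik by simp
    have l3: "enc 0 (Suc s) i < nn" using enc_lt[of 0 "Suc s" i] ik by simp
    have "EE (enc 0 (Suc s) i) (enc 1 (Suc s) k)"
      unfolding EE_def adjT_def using l2 l3 enc_dec[of "Suc s" i 0] enc_dec[of "Suc s" k 1] ik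
      unfolding adj1_def by simp
    then show "x \<in> ?B" using ik l1 l2 by simp
  qed
  have fin: "finite ?B"
  proof (rule finite_subset)
    show "?B \<subseteq> {..<nn} \<times> {..<nn}" by auto
  qed simp
  have "card ({..<m} \<times> {..<m}) \<le> card ?B" by (rule card_inj_on_le[OF inj sub fin])
  then show ?thesis unfolding num_edges_def by (simp add: card_cartesian_product)
qed

lemma nn_eq: "nn = 2 * (s + 2) * m" unfolding nn_def MM_def by simp

end

lemma num_edges_le: "num_edges n E \<le> n * n"
proof -
  have "{(u, v). u < v \<and> v < n \<and> E u v} \<subseteq> {..<n} \<times> {..<n}" by auto
  then have "card {(u, v). u < v \<and> v < n \<and> E u v} \<le> card ({..<n} \<times> {..<n})"
    by (rule card_mono[rotated]) simp
  then show ?thesis unfolding num_edges_def by (simp add: card_cartesian_product)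
qed

theorem theorem3:
  fixes l :: nat
  assumes "l \<ge> 3"
  shows "density_const l 4 \<ge> 1 / (real l + 1)^2"
proof -
  define S where "S = {c :: real. \<forall>N. \<exists>n \<ge> N. \<exists>E.
      critical 4 n E \<and> odd_girth_gt n E l \<and> real (num_edges n E) > c * (real n)^2}"
  define a where "a = 1 / (real l + 1)^2"
  have apos: "0 < a" unfolding a_def by simp
  define s where "s = (l - 3) div 2"
  have s1: "2 * (s + 2) \<le> l + 1" and s2: "l < 2 * s + 5" using assms unfolding s_def by auto
  have mem: "c \<in> S" if "c < a" for c
    unfolding S_def
  proof (intro CollectI allI)
    fix N
    define m where "m = 2 * (N + l) + 5"
    interpret tg m s by unfold_locales (auto simp: m_def)
    have lm: "l < m" unfolding m_def by simp
    have nneq: "nn = 2 * (s + 2) * m" by (rule nn_eq)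
    have Nn: "N \<le> nn" using nneq unfolding m_def by simp
    have crit: "critical 4 nn EE" by (rule critical4)
    have gir: "odd_girth_gt nn EE l" by (rule girth[OF lm s2])
    have ne: "real (m * m) \<le> real (num_edges nn EE)" using num_edges_ge by (simp only: of_nat_le_iff)
    have nnle: "real nn \<le> (real l + 1) * real m"
    proof -
      have "nn \<le> (l + 1) * m" unfolding nneq using s1 by (intro mult_right_mono) auto
      then have "real nn \<le> real ((l + 1) * m)" by (simp only: of_nat_le_iff)
      then show ?thesis by (simp add: algebra_simps)
    qed
    have "0 < nn" using nneq m_pos by simp
    then have nnpos: "0 < real nn" by simp
    have "(real nn)^2 \<le> ((real l + 1) * real m)^2" using nnle nnpos by (intro power_mono) auto
    then have "a * (real nn)^2 \<le> a * ((real l + 1) * real m)^2" using apos by (intro mult_left_mono) auto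
    also have "a * ((real l + 1) * real m)^2 = real (m * m)" unfolding a_def
      by (simp add: power_mult_distrib power2_eq_square)
    finally have h1: "a * (real nn)^2 \<le> real (m * m)" .
    have "c * (real nn)^2 < a * (real nn)^2" using that nnpos by (intro mult_strict_right_mono) auto
    then have "c * (real nn)^2 < real (num_edges nn EE)" using h1 ne by linarith
    then show "\<exists>n \<ge> N. \<exists>E. critical 4 n E \<and> odd_girth_gt n E l \<and> real (num_edges n E) > c * (real n)^2"
      using Nn crit gir by blast
  qed
  have bdd: "bdd_above S"
  proof (rule bdd_aboveI)
    fix c assume "c \<in> S"
    then obtain n E where n: "1 \<le> n" "real (num_edges n E) > c * (real n)^2"
      unfolding S_def by blast
    have "real (num_edges n E) \<le> real (n * n)" using num_edges_le[of n E] by (simp only: of_nat_le_iff)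
    then have "real (num_edges n E) \<le> (real n)^2" by (simp add: power2_eq_square)
    then have lt1: "c * (real n)^2 < 1 * (real n)^2" using n(2) by linarith
    have "c < 1" by (rule mult_right_less_imp_less[OF lt1]) simp
    then show "c \<le> 1" by simp
  qed
  have "a \<le> Sup S"
  proof (rule ccontr)
    assume "\<not> a \<le> Sup S"
    then have lt: "Sup S < a" by simp
    define c where "c = (Sup S + a) / 2"
    have "c < a" using lt unfolding c_def by simp
    then have "c \<in> S" by (rule mem)
    then have "c \<le> Sup S" using bdd by (rule cSup_upper)
    then show False using lt unfolding c_def by simp
  qed
  then show ?thesis unfolding density_const_def a_def S_def by simp
qed


end
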